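(* Let $\Gamma\in[0,1]$, $\Lambda>0$, $d_0\in(0,1]$, and let the thresholds be exponentially distributed with parameter $\Lambda$, i.e. $F(x)=1-e^{-\Lambda x}$, so that the hazard function $h_F(x)=f(x)/(1-F(x))$ equals $\Lambda$. Then (1) the HILT fluid-limit equation $\dot b=d$, $\dot d=h_F(\Gamma b)\Gamma d(1-b-d)-d$ becomes $$\dot b=d,\qquad \dot d=\Lambda\Gamma d(1-b-d)-d,$$ and (2) for its solution with $b(0)=0$, $d(0)=d_0$, the limit $b_\infty=\lim_{t\to\infty}b(t)$ exists and satisfies $$b_\infty=1-(1-d_0)e^{-\Lambda\Gamma b_\infty}.$$ *)

theory Defs
  imports Complex_Main
begin

definition expF :: "real \<Rightarrow> real \<Rightarrow> real" where
  "expF Lam x = (if x < 0 then 0 else 1 - exp (- Lam * x))"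

definition expf :: "real \<Rightarrow> real \<Rightarrow> real" where
  "expf Lam x = (if x < 0 then 0 else Lam * exp (- Lam * x))"

definition hazard :: "(real \<Rightarrow> real) \<Rightarrow> (real \<Rightarrow> real) \<Rightarrow> real \<Rightarrow> real" where
  "hazard F f x = f x / (1 - F x)"

end

theory Submission
  imports Defs "HOL-Analysis.Analysis"
begin

lemma incr:
  fixes f f' :: "real \<Rightarrow> real"
  assumes D: "\<forall>t\<ge>0. (f has_real_derivative f' t) (at t within {0..})"
    and nn: "\<And>t. a < t \<Longrightarrow> t < c \<Longrightarrow> f' t \<ge> 0" and a0: "0 \<le> a" and ac: "a \<le> c"
  shows "f a \<le> f c"
proof (rule DERIV_nonneg_imp_increasing_open[OF ac])
  fix x assume x: "a < x" "x < c"
  have "(f has_real_derivative f' x) (at x within {0..})" using D x a0 by auto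
  then have "(f has_real_derivative f' x) (at x within {0<..})"
    by (rule has_field_derivative_subset) auto
  moreover have "at x within {0<..} = at x" using x a0 by (intro at_within_open) auto
  ultimately show "\<exists>y. (f has_real_derivative y) (at x) \<and> 0 \<le> y" using nn x by auto
next
  show "continuous_on {a..c} f" unfolding continuous_on_eq_continuous_within
  proof
    fix x assume x: "x \<in> {a..c}"
    have "x \<ge> 0" using x a0 by auto
    then have "continuous (at x within {0..}) f" by (rule DERIV_continuous[OF D[rule_format]])
    then show "continuous (at x within {a..c}) f"
      by (rule continuous_within_subset) (use a0 in auto)
  qed
qed

lemma hazard_exp: "Lam > 0 \<Longrightarrow> x \<ge> 0 \<Longrightarrow> hazard (expF Lam) (expf Lam) x = Lam"
  by (simp add: hazard_def expF_def expf_def)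

theorem theorem3:
  fixes Gam Lam d0 :: real and b d :: "real \<Rightarrow> real"
  assumes "0 \<le> Gam" "Gam \<le> 1" "Lam > 0" "0 < d0" "d0 \<le> 1"
    and "b 0 = 0" "d 0 = d0"
    and "\<forall>t\<ge>0. (b has_real_derivative d t) (at t within {0..})"
    and "\<forall>t\<ge>0. (d has_real_derivative
            hazard (expF Lam) (expf Lam) (Gam * b t) * Gam * d t * (1 - b t - d t) - d t)
            (at t within {0..})"
  shows "(\<forall>x\<ge>0. hazard (expF Lam) (expf Lam) x = Lam)
    \<and> (\<forall>t\<ge>0. (d has_real_derivative Lam * Gam * d t * (1 - b t - d t) - d t) (at t within {0..}))
    \<and> (\<exists>binf. (b \<longlongrightarrow> binf) at_top \<and> binf = 1 - (1 - d0) * exp (- Lam * Gam * binf))"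
proof -
  note G0 = assms(1) and L0 = assms(3) and d0p = assms(4) and d01 = assms(5)
  note b0 = assms(6) and dd0 = assms(7) and Db = assms(8) and Dd = assms(9)
  define H where "H t = hazard (expF Lam) (expf Lam) (Gam * b t)" for t
  define D where "D t = H t * Gam * d t * (1 - b t - d t) - d t" for t
  define c where "c = Lam * Gam"
  have Dd': "\<forall>t\<ge>0. (d has_real_derivative D t) (at t within {0..})"
    using Dd unfolding D_def H_def by auto
  define Q where "Q t = (1 - b t - d t) * exp (c * b t)" for t
  have DQ: "\<forall>t\<ge>0. (Q has_real_derivative
      (- d t - D t) * exp (c * b t) + (1 - b t - d t) * (exp (c * b t) * (c * d t))) (at t within {0..})"
  proof (intro allI impI)
    fix t :: real assume t: "t \<ge> 0"
    note [derivative_intros] = Db[rule_format, OF t] Dd'[rule_format, OF t]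
    show "(Q has_real_derivative
      (- d t - D t) * exp (c * b t) + (1 - b t - d t) * (exp (c * b t) * (c * d t))) (at t within {0..})"
      unfolding Q_def by (auto intro!: derivative_eq_intros)
  qed
  have Hb: "H t = Lam" if "b t \<ge> 0" for t
    unfolding H_def using that G0 L0 by (intro hazard_exp) auto
  have DQ0: "(- d t - D t) * exp (c * b t) + (1 - b t - d t) * (exp (c * b t) * (c * d t)) = 0"
    if "b t \<ge> 0" for t
    unfolding D_def Hb[OF that] c_def by (simp add: algebra_simps)
  have Qconst: "Q t = Q 0" if "t \<ge> 0" "\<And>s. 0 < s \<Longrightarrow> s < t \<Longrightarrow> b s \<ge> 0" for t
  proof -
    have "Q 0 \<le> Q t"
      by (rule incr[OF DQ]) (use that DQ0 in auto)
    moreover have "- Q 0 \<le> - Q t"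
      by (rule incr[of "\<lambda>t. - Q t", OF _ _ order_refl that(1)])
         (use DQ that DQ0 in \<open>auto intro!: derivative_eq_intros\<close>)
    ultimately show ?thesis by linarith
  qed
  have Q0: "Q 0 = 1 - d0" unfolding Q_def using b0 dd0 by simp
  have bpos: "b t \<ge> 0" if "t \<ge> 0" "\<And>s. 0 < s \<Longrightarrow> s < t \<Longrightarrow> d s \<ge> 0" for t
    using incr[OF Db that(2) order_refl that(1)] b0 by simp
  have contd: "continuous_on {0..} d" unfolding continuous_on_eq_continuous_within
    using DERIV_continuous[OF Dd'[rule_format]] by auto
  have dpos: "\<forall>t\<ge>0. d t > 0"
  proof (rule ccontr)
    assume "\<not> (\<forall>t\<ge>0. d t > 0)"
    then obtain t1 where t1: "t1 \<ge> 0" "d t1 \<le> 0" by force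
    define S where "S = {t. 0 \<le> t \<and> d t \<le> 0}"
    have "S = {0..} \<inter> d -` {..0}" unfolding S_def by auto
    then have "closed S" using continuous_closed_preimage[OF contd] by auto
    moreover have "S \<noteq> {}" using t1 unfolding S_def by auto
    moreover have bdd: "bdd_below S" unfolding S_def by (rule bdd_belowI[of _ 0]) auto
    ultimately have TS: "Inf S \<in> S" by (rule closed_contains_Inf[rotated -1])
    define T where "T = Inf S"
    have T0: "T \<ge> 0" "d T \<le> 0" using TS unfolding T_def S_def by auto
    have less: "d s > 0" if "0 \<le> s" "s < T" for s
    proof (rule ccontr)
      assume "\<not> d s > 0"
      then have "s \<in> S" using that unfolding S_def by auto
      then have "T \<le> s" unfolding T_def using bdd by (rule cInf_lower)
      then show False using that by auto
    qed
    have bT: "b s \<ge> 0" if "0 \<le> s" "s \<le> T" for s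
      by (rule bpos) (use that less in \<open>auto intro: less_imp_le\<close>)
    have QT: "Q s = 1 - d0" if "0 \<le> s" "s \<le> T" for s
      using Qconst[of s] bT that Q0 by auto
    have u: "1 - b s - d s \<ge> 0" if "0 \<le> s" "s \<le> T" for s
    proof -
      have "(1 - b s - d s) * exp (c * b s) \<ge> 0" using QT[OF that] d01 unfolding Q_def by auto
      then show ?thesis by (simp add: zero_le_mult_iff)
    qed
    define P where "P t = d t * exp t" for t
    have DP: "\<forall>t\<ge>0. (P has_real_derivative D t * exp t + d t * exp t) (at t within {0..})"
    proof (intro allI impI)
      fix t :: real assume t: "t \<ge> 0"
      note [derivative_intros] = Dd'[rule_format, OF t]
      show "(P has_real_derivative D t * exp t + d t * exp t) (at t within {0..})"
        unfolding P_def by (auto intro!: derivative_eq_intros)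
    qed
    have "P 0 \<le> P T"
    proof (rule incr[OF DP _ order_refl T0(1)])
      fix t assume t: "0 < t" "t < T"
      have "H t = Lam" using bT[of t] t by (intro Hb) auto
      then have "D t * exp t + d t * exp t = exp t * (Lam * Gam * d t * (1 - b t - d t))"
        unfolding D_def by (simp add: algebra_simps)
      also have "\<dots> \<ge> 0" using less[of t] u[of t] t G0 L0 by simp
      finally show "D t * exp t + d t * exp t \<ge> 0" .
    qed
    then have "d0 \<le> d T * exp T" unfolding P_def using dd0 by simp
    moreover have "d T * exp T \<le> 0" using T0 by (simp add: mult_nonpos_nonneg)
    ultimately show False using d0p by linarith
  qed
  have bge: "b t \<ge> 0" if "t \<ge> 0" for t
    by (rule bpos) (use that dpos in \<open>auto intro: less_imp_le\<close>)
  have part2: "\<forall>t\<ge>0. (d has_real_derivative Lam * Gam * d t * (1 - b t - d t) - d t) (at t within {0..})"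
  proof (intro allI impI)
    fix t :: real assume t: "t \<ge> 0"
    have "H t = Lam" using bge[OF t] by (rule Hb)
    then show "(d has_real_derivative Lam * Gam * d t * (1 - b t - d t) - d t) (at t within {0..})"
      using Dd'[rule_format, OF t] unfolding D_def by simp
  qed
  have inv: "d t = 1 - b t - (1 - d0) * exp (- c * b t)" if "t \<ge> 0" for t
  proof -
    have "(1 - b t - d t) * exp (c * b t) = 1 - d0"
      using Qconst[of t] that bge Q0 unfolding Q_def by auto
    then have "1 - b t - d t = (1 - d0) / exp (c * b t)" by (simp add: field_simps)
    then show ?thesis by (simp add: exp_minus field_simps)
  qed
  have b1: "b t \<le> 1" if "t \<ge> 0" for t
  proof -
    have "(1 - d0) * exp (- c * b t) \<ge> 0" using d01 by simp
    then show ?thesis using inv[OF that] dpos that by force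
  qed
  have bmono: "b s \<le> b t" if "0 \<le> s" "s \<le> t" for s t
    by (rule incr[OF Db _ that]) (use that dpos in \<open>auto intro: less_imp_le\<close>)
  define binf where "binf = (SUP t\<in>{0..}. b t)"
  have bddb: "bdd_above (b ` {0..})" using b1 by (intro bdd_aboveI[of _ 1]) auto
  have bup: "b t \<le> binf" if "t \<ge> 0" for t
    unfolding binf_def using bddb that by (intro cSUP_upper) auto
  have blim: "(b \<longlongrightarrow> binf) at_top"
  proof (rule order_tendstoI)
    fix a assume a: "a < binf"
    then obtain t0 where t0: "t0 \<ge> 0" "a < b t0"
      unfolding binf_def using less_cSUP_iff[OF _ bddb, of a] by auto
    show "eventually (\<lambda>t. a < b t) at_top"
      unfolding eventually_at_top_linorder
      using t0 bmono by (intro exI[of _ t0]) (auto intro: less_le_trans)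
  next
    fix a assume a: "binf < a"
    show "eventually (\<lambda>t. b t < a) at_top"
      unfolding eventually_at_top_linorder
      using a bup by (intro exI[of _ 0]) (auto intro: le_less_trans)
  qed
  define L where "L = 1 - binf - (1 - d0) * exp (- c * binf)"
  have dlim: "(d \<longlongrightarrow> L) at_top"
  proof -
    have "((\<lambda>t. 1 - b t - (1 - d0) * exp (- c * b t)) \<longlongrightarrow> L) at_top"
      unfolding L_def by (intro tendsto_intros blim)
    moreover have "eventually (\<lambda>t. 1 - b t - (1 - d0) * exp (- c * b t) = d t) at_top"
      unfolding eventually_at_top_linorder using inv by (intro exI[of _ 0]) auto
    ultimately show ?thesis by (rule Lim_transform_eventually)
  qed
  have L0: "L \<ge> 0"
  proof (rule tendsto_lowerbound[OF dlim])
    show "eventually (\<lambda>t. 0 \<le> d t) at_top"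
      unfolding eventually_at_top_linorder using dpos by (intro exI[of _ 0]) (auto intro: less_imp_le)
  qed simp
  have "L = 0"
  proof (rule ccontr)
    assume "L \<noteq> 0"
    with L0 have Lp: "L > 0" by simp
    then have "eventually (\<lambda>t. L / 2 < d t) at_top" by (intro order_tendstoD(1)[OF dlim]) simp
    then obtain t0 where t0: "\<And>t. t \<ge> t0 \<Longrightarrow> L / 2 < d t"
      unfolding eventually_at_top_linorder by auto
    define t1 where "t1 = max t0 0"
    define R where "R t = b t - L / 2 * t" for t
    have DR: "\<forall>t\<ge>0. (R has_real_derivative d t - L / 2) (at t within {0..})"
    proof (intro allI impI)
      fix t :: real assume t: "t \<ge> 0"
      note [derivative_intros] = Db[rule_format, OF t]
      show "(R has_real_derivative d t - L / 2) (at t within {0..})"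
        unfolding R_def by (auto intro!: derivative_eq_intros)
    qed
    have "R t1 \<le> R (t1 + 4 / L)"
      by (rule incr[OF DR]) (use t0 Lp in \<open>auto simp: t1_def intro: less_imp_le\<close>)
    moreover have "L / 2 * (t1 + 4 / L) = L / 2 * t1 + 2" using Lp by (simp add: field_simps)
    ultimately have "b t1 + 2 \<le> b (t1 + 4 / L)" unfolding R_def by linarith
    moreover have "b t1 \<ge> 0" "b (t1 + 4 / L) \<le> 1" using bge b1 Lp by (auto simp: t1_def)
    ultimately show False by linarith
  qed
  then have "binf = 1 - (1 - d0) * exp (- Lam * Gam * binf)" unfolding L_def c_def by simp
  then show ?thesis using part2 blim hazard_exp[OF assms(3)] by auto
qed
end
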